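(* For every surjective $\boxplus$-morphism $\phi:[1]^{m+n+1}\to[1]^{n+1}$ there exist monotone functions $\phi_i:[1]^{k_i}\to[1]$, $1\leq i\leq n+1$, with $k_1+\cdots+k_{n+1}=m+n+1$, and a coordinate permutation $g$ of $[1]^{m+n+1}$ such that $\phi=(\phi_1\times\phi_2\times\cdots\times\phi_{n+1})\circ g$.
   Context: $[1]=\{0<1\}$, $[1]^n$ the product poset ($[1]^0=[0]$). An interval in a poset is a non-empty subset $[x,z]=\{y:x\leq y\leq z\}$. $\boxplus$ is the category whose objects are the $[1]^n$ ($n\geq0$) and whose morphisms are the monotone functions mapping every interval onto an interval. $\phi_1\times\cdots\times\phi_{n+1}:[1]^{k_1+\cdots+k_{n+1}}\to[1]^{n+1}$ is the Cartesian product of functions. *)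

theory Defs
  imports "HOL-Combinatorics.Permutations"
begin

text \<open>The poset [1]^n: bool lists of length n (False < True), ordered componentwise.\<close>

definition cube :: "nat \<Rightarrow> bool list set" where
  "cube n = {xs. length xs = n}"

definition cle :: "bool list \<Rightarrow> bool list \<Rightarrow> bool" where
  "cle xs ys = list_all2 (\<le>) xs ys"

definition cinterval :: "nat \<Rightarrow> bool list \<Rightarrow> bool list \<Rightarrow> bool list set" where
  "cinterval n x z = {y \<in> cube n. cle x y \<and> cle y z}"

definition is_interval :: "nat \<Rightarrow> bool list set \<Rightarrow> bool" where
  "is_interval n S \<longleftrightarrow> (\<exists>x\<in>cube n. \<exists>z\<in>cube n. cle x z \<and> S = cinterval n x z)"

definition cmono :: "nat \<Rightarrow> (bool list \<Rightarrow> 'b) \<Rightarrow> ('b \<Rightarrow> 'b \<Rightarrow> bool) \<Rightarrow> bool" where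
  "cmono m f r \<longleftrightarrow> (\<forall>x\<in>cube m. \<forall>y\<in>cube m. cle x y \<longrightarrow> r (f x) (f y))"

text \<open>Morphisms of the box category from [1]^m to [1]^n (considered on cube m).\<close>
definition box_morphism :: "nat \<Rightarrow> nat \<Rightarrow> (bool list \<Rightarrow> bool list) \<Rightarrow> bool" where
  "box_morphism m n f \<longleftrightarrow>
     f ` cube m \<subseteq> cube n \<and> cmono m f cle \<and>
     (\<forall>S. is_interval m S \<longrightarrow> is_interval n (f ` S))"

definition coord_perm :: "nat \<Rightarrow> (nat \<Rightarrow> nat) \<Rightarrow> bool list \<Rightarrow> bool list" where
  "coord_perm N \<sigma> x = map (\<lambda>j. x ! \<sigma> j) [0..<N]"

text \<open>Cartesian product \<phi>_0 \<times> ... \<times> \<phi>_{p-1} : [1]^{k_0+...+k_{p-1}} \<rightarrow> [1]^p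
  (0-indexed blocks of consecutive coordinates).\<close>
definition prod_map :: "nat \<Rightarrow> (nat \<Rightarrow> nat) \<Rightarrow> (nat \<Rightarrow> bool list \<Rightarrow> bool) \<Rightarrow> bool list \<Rightarrow> bool list" where
  "prod_map p k \<phi> y = map (\<lambda>i. \<phi> i (take (k i) (drop (\<Sum>j<i. k j) y))) [0..<p]"

end

theory Submission
  imports Defs
begin


lemma cle_iff: "cle u v \<longleftrightarrow> length u = length v \<and> (\<forall>l<length u. u!l \<longrightarrow> v!l)"
  unfolding cle_def list_all2_conv_all_nth by auto

lemma cle_refl: "cle u u" by (simp add: cle_iff)
lemma cle_trans: "cle u v \<Longrightarrow> cle v w \<Longrightarrow> cle u w" by (auto simp: cle_iff)
lemma cle_antisym: "cle u v \<Longrightarrow> cle v u \<Longrightarrow> u = v"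
  by (auto simp: cle_iff intro!: nth_equalityI)

lemma nth_upd_neq'[simp]: "l \<noteq> j \<Longrightarrow> xs[j := x] ! l = xs ! l"
  by simp

lemma cube_iff[simp]: "x \<in> cube n \<longleftrightarrow> length x = n" by (simp add: cube_def)

lemma cint_iff: "w \<in> cinterval n u v \<longleftrightarrow> length w = n \<and> cle u w \<and> cle w v"
  by (simp add: cinterval_def)

context
  fixes N p :: nat and \<phi> :: "bool list \<Rightarrow> bool list"
  assumes bm: "box_morphism N p \<phi>"
begin

lemma len_phi: "length x = N \<Longrightarrow> length (\<phi> x) = p"
proof -
  assume "length x = N"
  then have "x \<in> cube N" by simp
  moreover have "\<phi> ` cube N \<subseteq> cube p" using bm unfolding box_morphism_def by blast
  ultimately have "\<phi> x \<in> cube p" by blast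
  then show ?thesis by simp
qed

lemma mono_phi: "length x = N \<Longrightarrow> cle x y \<Longrightarrow> cle (\<phi> x) (\<phi> y)"
proof -
  assume a: "length x = N" "cle x y"
  then have "length y = N" by (simp add: cle_iff)
  moreover have "cmono N \<phi> cle" using bm unfolding box_morphism_def by blast
  ultimately show ?thesis using a unfolding cmono_def by simp
qed

lemma mono_nth: "length x = N \<Longrightarrow> cle x y \<Longrightarrow> i < p \<Longrightarrow> \<phi> x ! i \<Longrightarrow> \<phi> y ! i"
proof -
  assume a: "length x = N" "cle x y" "i < p" "\<phi> x ! i"
  then have "cle (\<phi> x) (\<phi> y)" using mono_phi by blast
  then show ?thesis using a len_phi unfolding cle_iff by simp
qed

lemma img:
  assumes u: "length u = N" and uv: "cle u v"
  shows "\<phi> ` cinterval N u v = cinterval p (\<phi> u) (\<phi> v)"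
proof -
  have v: "length v = N" using u uv by (simp add: cle_iff)
  have "is_interval N (cinterval N u v)" unfolding is_interval_def
    apply (rule bexI[of _ u]) apply (rule bexI[of _ v]) using u v uv by auto
  then have "is_interval p (\<phi> ` cinterval N u v)" using bm unfolding box_morphism_def by auto
  then obtain P Q where PQ: "length P = p" "length Q = p" "cle P Q"
    and eq: "\<phi> ` cinterval N u v = cinterval p P Q" unfolding is_interval_def by auto
  have uin: "u \<in> cinterval N u v" using u uv by (simp add: cint_iff cle_refl)
  have vin: "v \<in> cinterval N u v" using v uv by (simp add: cint_iff cle_refl)
  have "P \<in> cinterval p P Q" using PQ by (simp add: cint_iff cle_refl)
  then obtain w where w: "w \<in> cinterval N u v" "P = \<phi> w" using eq by auto
  have "cle (\<phi> u) P" using w u by (simp add: cint_iff mono_phi)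
  moreover have "cle P (\<phi> u)" using eq uin by (auto simp: cint_iff)
  ultimately have P: "P = \<phi> u" by (rule cle_antisym[rotated])
  have "Q \<in> cinterval p P Q" using PQ by (simp add: cint_iff cle_refl)
  then obtain w' where w': "w' \<in> cinterval N u v" "Q = \<phi> w'" using eq by auto
  have "cle Q (\<phi> v)" using w' by (simp add: cint_iff mono_phi)
  moreover have "cle (\<phi> v) Q" using eq vin by (auto simp: cint_iff)
  ultimately have Q: "Q = \<phi> v" by (rule cle_antisym)
  show ?thesis using eq P Q by simp
qed

lemma princP:
  assumes u: "length u = N" and uv: "cle u v" and a: "a < p"
    and u0: "\<not> \<phi> u ! a"
    and up: "\<And>w. w \<in> cinterval N u v \<Longrightarrow> w \<noteq> u \<Longrightarrow> \<phi> w ! a"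
    and w: "w \<in> cinterval N u v" and wu: "w \<noteq> u"
  shows "\<phi> w = (\<phi> u)[a := True]"
proof -
  have IMG: "\<phi> ` cinterval N u v = cinterval p (\<phi> u) (\<phi> v)" using img u uv by blast
  have lw: "length w = N" and uw: "cle u w" and wv: "cle w v" using w by (auto simp: cint_iff)
  have lu: "length (\<phi> u) = p" and lw': "length (\<phi> w) = p" using len_phi u lw by auto
  have le: "cle (\<phi> u) (\<phi> w)" using mono_phi u uw by blast
  have wv': "cle (\<phi> w) (\<phi> v)" using mono_phi lw wv by blast
  show ?thesis
  proof (rule nth_equalityI)
    show "length (\<phi> w) = length ((\<phi> u)[a := True])" using lu lw' by simp
    fix c assume c: "c < length (\<phi> w)"
    show "\<phi> w ! c = (\<phi> u)[a := True] ! c"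
    proof (cases "c = a")
      case True then show ?thesis using up[OF w wu] a lu by simp
    next
      case False
      show ?thesis
      proof (rule ccontr)
        assume ne: "\<phi> w ! c \<noteq> (\<phi> u)[a := True] ! c"
        then have cu: "\<not> \<phi> u ! c" and cw: "\<phi> w ! c" using le c lw' False by (auto simp: cle_iff)
        define q where "q = (\<phi> u)[c := True]"
        have "q \<in> cinterval p (\<phi> u) (\<phi> v)"
          using le wv' c lw' lu cw unfolding q_def by (auto simp: cint_iff cle_iff nth_list_update)
        then obtain w' where w': "w' \<in> cinterval N u v" "q = \<phi> w'" using IMG by (metis imageE)
        show False
        proof (cases "w' = u")
          case True then show False using w' cu c lw' lu unfolding q_def
            by (metis length_list_update nth_list_update_eq)
        next
          case False
          then have "\<phi> w' ! a" using up w' by blast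
          then show False using w' u0 \<open>c \<noteq> a\<close> unfolding q_def by (metis nth_list_update_neq)
        qed
      qed
    qed
  qed
qed

lemma princP':
  assumes u: "length u = N" and uv: "cle u v" and a: "a < p"
    and v1: "\<phi> v ! a"
    and dn: "\<And>w. w \<in> cinterval N u v \<Longrightarrow> w \<noteq> v \<Longrightarrow> \<not> \<phi> w ! a"
    and w: "w \<in> cinterval N u v" and wv: "w \<noteq> v"
  shows "\<phi> w = (\<phi> v)[a := False]"
proof -
  have IMG: "\<phi> ` cinterval N u v = cinterval p (\<phi> u) (\<phi> v)" using img u uv by blast
  have lw: "length w = N" and uw: "cle u w" and wv': "cle w v" using w by (auto simp: cint_iff)
  have lv: "length v = N" using u uv by (simp add: cle_iff)
  have lu: "length (\<phi> v) = p" and lw': "length (\<phi> w) = p" using len_phi lv lw by auto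
  have le: "cle (\<phi> w) (\<phi> v)" using mono_phi lw wv' by blast
  have uw': "cle (\<phi> u) (\<phi> w)" using mono_phi u uw by blast
  show ?thesis
  proof (rule nth_equalityI)
    show "length (\<phi> w) = length ((\<phi> v)[a := False])" using lu lw' by simp
    fix c assume c: "c < length (\<phi> w)"
    show "\<phi> w ! c = (\<phi> v)[a := False] ! c"
    proof (cases "c = a")
      case True then show ?thesis using dn[OF w wv] a lu by simp
    next
      case False
      show ?thesis
      proof (rule ccontr)
        assume ne: "\<phi> w ! c \<noteq> (\<phi> v)[a := False] ! c"
        then have cu: "\<phi> v ! c" and cw: "\<not> \<phi> w ! c" using le c lw' False by (auto simp: cle_iff)
        define q where "q = (\<phi> v)[c := False]"
        have "q \<in> cinterval p (\<phi> u) (\<phi> v)"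
          using le uw' c lw' lu cw unfolding q_def by (auto simp: cint_iff cle_iff nth_list_update)
        then obtain w' where w': "w' \<in> cinterval N u v" "q = \<phi> w'" using IMG by (metis imageE)
        show False
        proof (cases "w' = v")
          case True then show False using w' cu c lw' lu unfolding q_def
            by (metis length_list_update nth_list_update_eq)
        next
          case False
          then have "\<not> \<phi> w' ! a" using dn w' by blast
          then show False using w' v1 \<open>c \<noteq> a\<close> unfolding q_def by (metis nth_list_update_neq)
        qed
      qed
    qed
  qed
qed

end

definition hd_dist :: "bool list \<Rightarrow> bool list \<Rightarrow> nat" where
  "hd_dist x y = card {l. l < length x \<and> x!l \<noteq> y!l}"

lemma hd_dist_sym: "length x = length y \<Longrightarrow> hd_dist x y = hd_dist y x"
  unfolding hd_dist_def by metis

definition condp :: "nat \<Rightarrow> nat \<Rightarrow> (bool list \<Rightarrow> bool list) \<Rightarrow> nat \<Rightarrow> bool list \<Rightarrow> nat \<Rightarrow> bool" where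
  "condp N p \<phi> j x a \<longleftrightarrow> a < p \<and> length x = N \<and> \<not> x!j \<and> \<not> \<phi> x ! a \<and> \<phi> (x[j := True]) ! a"

definition minp :: "nat \<Rightarrow> nat \<Rightarrow> (bool list \<Rightarrow> bool list) \<Rightarrow> nat \<Rightarrow> bool list \<Rightarrow> bool list \<Rightarrow> bool" where
  "minp N p \<phi> j x y \<longleftrightarrow> (\<forall>x' y' a' b'. condp N p \<phi> j x' a' \<and> condp N p \<phi> j y' b' \<and> a' \<noteq> b'
      \<longrightarrow> hd_dist x y \<le> hd_dist x' y')"

lemma minp_sym: "length x = length y \<Longrightarrow> minp N p \<phi> j x y \<Longrightarrow> minp N p \<phi> j y x"
  unfolding minp_def using hd_dist_sym by metis

lemma edge:
  assumes bm: "box_morphism N p \<phi>" and j: "j < N" and cy: "condp N p \<phi> j y b"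
    and ab: "a \<noteq> b" and a: "a < p" and y0: "\<not> \<phi> y ! a" and y1: "\<phi> (y[j := True]) ! a"
  shows False
proof -
  have ly: "length y = N" and yj: "\<not> y!j" and b: "b < p" and yb: "\<not> \<phi> y ! b"
    and yb1: "\<phi> (y[j := True]) ! b" using cy unfolding condp_def by auto
  have le: "cle y (y[j := True])" using ly by (auto simp: cle_iff) (metis nth_list_update_eq nth_list_update_neq)
  have "\<phi> (y[j := True]) = (\<phi> y)[a := True]"
  proof (rule princP[OF bm ly le a y0])
    fix w assume w: "w \<in> cinterval N y (y[j := True])" and wy: "w \<noteq> y"
    have lw: "length w = N" and c1: "cle y w" and c2: "cle w (y[j := True])" using w by (auto simp: cint_iff)
    have A: "w!l = y!l" if "l < N" "l \<noteq> j" for l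
    proof -
      have "y!l \<longrightarrow> w!l" using c1 that ly unfolding cle_iff by auto
      moreover have "w!l \<longrightarrow> y[j := True]!l" using c2 that lw unfolding cle_iff by auto
      moreover have "y[j := True]!l = y!l" using that by simp
      ultimately show ?thesis by blast
    qed
    have wj: "w!j"
    proof (rule ccontr)
      assume "\<not> w!j"
      note nw = this
      have "w = y"
      proof (rule nth_equalityI)
        show "length w = length y" using lw ly by simp
        fix i assume "i < length w"
        then show "w!i = y!i" using A nw yj lw by (cases "i = j") auto
      qed
      then show False using wy by simp
    qed
    have "w = y[j := True]"
    proof (rule nth_equalityI)
      show "length w = length (y[j := True])" using lw ly by simp
      fix i assume "i < length w"
      then show "w!i = y[j := True]!i" using A wj lw ly j by (cases "i = j") auto
    qed
    then show "\<phi> w ! a" using y1 by simp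
  next
    show "y[j := True] \<in> cinterval N y (y[j := True])" using le ly by (simp add: cint_iff cle_refl)
    show "y[j := True] \<noteq> y" using yj j ly by (metis nth_list_update_eq)
  qed
  then have "\<phi> (y[j := True]) ! b = \<phi> y ! b" using ab by simp
  then show False using yb yb1 by simp
qed


lemma ex_diff: "length u = N \<Longrightarrow> length x = N \<Longrightarrow> u \<noteq> x \<Longrightarrow> \<exists>l<N. x!l \<noteq> u!l"
  by (metis nth_equalityI)

lemma cle_upd: "length u = N \<Longrightarrow> cle u (u[j := True])"
  by (auto simp: cle_iff) (metis nth_list_update_eq nth_list_update_neq)

context
  fixes N p :: nat and \<phi> :: "bool list \<Rightarrow> bool list" and j :: nat and x y :: "bool list" and a b :: nat
  assumes bm: "box_morphism N p \<phi>" and j: "j < N"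
    and cx: "condp N p \<phi> j x a" and cy: "condp N p \<phi> j y b" and ab: "a \<noteq> b"
    and mn: "minp N p \<phi> j x y"
begin

lemma updj: "length xs = N \<Longrightarrow> xs[j := v] ! l = (if j = l then v else xs ! l)"
  using j by (simp add: nth_list_update)

lemma facts: "length x = N" "length y = N" "\<not> x!j" "\<not> y!j" "a < p" "b < p"
  "\<not> \<phi> x ! a" "\<phi> (x[j := True]) ! a" "\<not> \<phi> y ! b" "\<phi> (y[j := True]) ! b"
  using cx cy unfolding condp_def by auto

lemma intr:
  assumes lu: "length u = N" and uj: "\<not> u!j" and box: "\<And>l. l < N \<Longrightarrow> x!l = y!l \<Longrightarrow> u!l = x!l"
    and ux: "u \<noteq> x" and uy: "u \<noteq> y"
  shows "\<phi> (u[j := True]) = \<phi> u"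
proof (rule ccontr)
  assume ne: "\<phi> (u[j := True]) \<noteq> \<phi> u"
  have l1: "length (\<phi> (u[j := True])) = p" and l2: "length (\<phi> u) = p"
    using len_phi[OF bm] lu by auto
  obtain c where c: "c < p" "\<phi> u ! c \<noteq> \<phi> (u[j := True]) ! c"
    using ex_diff[OF l2 l1] ne by metis
  have "\<phi> u ! c \<longrightarrow> \<phi> (u[j := True]) ! c" using mono_nth[OF bm lu cle_upd[OF lu] c(1)] by blast
  then have cu: "condp N p \<phi> j u c" using c lu uj unfolding condp_def by auto
  define D1 where "D1 = {l. l < N \<and> x!l \<noteq> u!l}"
  define D2 where "D2 = {l. l < N \<and> u!l \<noteq> y!l}"
  define D where "D = {l. l < N \<and> x!l \<noteq> y!l}"
  have DU: "D = D1 \<union> D2" unfolding D_def D1_def D2_def using box by auto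
  have DI: "D1 \<inter> D2 = {}" unfolding D1_def D2_def using box by auto
  have fin: "finite D1" "finite D2" unfolding D1_def D2_def by auto
  have cD: "card D = card D1 + card D2" using DU DI fin card_Un_disjoint by metis
  have "D1 \<noteq> {}" using ex_diff[OF lu facts(1) ux] unfolding D1_def by auto
  then have p1: "card D1 > 0" using fin by auto
  have "D2 \<noteq> {}" using ex_diff[OF lu facts(2) uy] unfolding D2_def by auto
  then have p2: "card D2 > 0" using fin by auto
  have hxy: "hd_dist x y = card D" unfolding hd_dist_def D_def using facts(1) by simp
  have hxu: "hd_dist x u = card D1" unfolding hd_dist_def D1_def using facts(1) by simp
  have huy: "hd_dist u y = card D2" unfolding hd_dist_def D2_def using lu by simp
  show False
  proof (cases "c = a")
    case True
    then have "hd_dist x y \<le> hd_dist u y" using mn cu cy ab unfolding minp_def by blast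
    then show False using hxy huy cD p1 by simp
  next
    case False
    then have "hd_dist x y \<le> hd_dist x u" using mn cu cx unfolding minp_def by blast
    then show False using hxy hxu cD p2 by simp
  qed
qed

lemma upside:
  assumes T0: "\<exists>l<N. \<not> x!l \<and> y!l"
    and w: "w \<in> cinterval N x (map (\<lambda>l. x!l \<or> y!l \<or> l = j) [0..<N])" and wx: "w \<noteq> x"
  shows "\<phi> w = (\<phi> x)[a := True]"
proof -
  define W where "W = map (\<lambda>l. x!l \<or> y!l \<or> l = j) [0..<N]"
  have lW: "length W = N" unfolding W_def by simp
  have xW: "cle x W" unfolding W_def using facts(1) by (auto simp: cle_iff)
  note lx = facts(1)
  have xj1: "cle (x[j := True]) (y[j := True])" if "cle x y" for y
    using that lx by (auto simp: cle_iff nth_list_update updj)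
  show ?thesis
  proof (rule princP[OF bm facts(1) xW facts(5) facts(7)])
    show "w \<in> cinterval N x W" using w unfolding W_def .
    show "w \<noteq> x" by fact
  next
    fix w assume w: "w \<in> cinterval N x W" and wx: "w \<noteq> x"
    have lw: "length w = N" and c1: "cle x w" and c2: "cle w W" using w by (auto simp: cint_iff)
    obtain l where l: "l < N" "x!l \<noteq> w!l" using ex_diff[OF lw lx wx] by blast
    have xl: "\<not> x!l" "w!l" using l c1 lx unfolding cle_iff by auto
    show "\<phi> w ! a"
    proof (cases "l = j")
      case True
      have "cle (x[j := True]) w" using c1 xl True lx lw unfolding cle_iff by (auto simp: nth_list_update updj)
      then show ?thesis using mono_nth[OF bm _ _ facts(5) facts(8)] lx by simp
    next
      case False
      have "w!l \<longrightarrow> W!l" using c2 l lw unfolding cle_iff by auto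
      then have yl: "y!l" using xl False l unfolding W_def by simp
      define v where "v = x[l := True]"
      have lv: "length v = N" unfolding v_def using lx by simp
      have vw: "cle v w" using c1 xl lx lw l(1) unfolding v_def cle_iff by (auto simp: nth_list_update)
      have xv: "cle x v" using lx unfolding v_def by (rule cle_upd)
      have "\<phi> v ! a"
      proof (cases "v = y")
        case True
        show ?thesis
        proof (rule ccontr)
          assume n: "\<not> \<phi> v ! a"
          have "\<phi> (y[j := True]) ! a" using mono_nth[OF bm _ xj1[OF xv] facts(5) facts(8)] lx True by simp
          then show False using edge[OF bm j cy ab facts(5)] n True by simp
        qed
      next
        case vy: False
        have vj: "\<not> v!j" using facts(3) False unfolding v_def by simp
        have box: "v!l' = x!l'" if "l' < N" "x!l' = y!l'" for l'
        proof -
          have "l' \<noteq> l" using that xl yl by auto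
          then show ?thesis unfolding v_def by simp
        qed
        have vx: "v \<noteq> x" using xl l lx unfolding v_def by (metis nth_list_update_eq)
        have eq: "\<phi> (v[j := True]) = \<phi> v" by (rule intr[OF lv vj box vx vy])
        have "\<phi> (v[j := True]) ! a" using mono_nth[OF bm _ xj1[OF xv] facts(5) facts(8)] lx by simp
        then show ?thesis using eq by simp
      qed
      then show ?thesis using mono_nth[OF bm lv vw facts(5)] by simp
    qed
  qed
qed

lemma downside:
  assumes T1: "\<exists>l<N. x!l \<and> \<not> y!l"
    and w: "w \<in> cinterval N (map (\<lambda>l. x!l \<and> y!l) [0..<N]) (x[j := True])" and wx: "w \<noteq> x[j := True]"
  shows "\<phi> w = (\<phi> (x[j := True]))[a := False]"
proof -
  define Z where "Z = map (\<lambda>l. x!l \<and> y!l) [0..<N]"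
  note lx = facts(1)
  have lZ: "length Z = N" unfolding Z_def by simp
  have Zx: "cle Z (x[j := True])" unfolding Z_def using lx by (auto simp: cle_iff nth_list_update updj)
  show ?thesis
  proof (rule princP'[OF bm lZ Zx facts(5) facts(8)])
    show "w \<in> cinterval N Z (x[j := True])" using w unfolding Z_def .
    show "w \<noteq> x[j := True]" by fact
  next
    fix w assume w: "w \<in> cinterval N Z (x[j := True])" and wx: "w \<noteq> x[j := True]"
    have lw: "length w = N" and c1: "cle Z w" and c2: "cle w (x[j := True])" using w by (auto simp: cint_iff)
    have lxj: "length (x[j := True]) = N" using lx by simp
    obtain l where l: "l < N" "x[j := True]!l \<noteq> w!l" using ex_diff[OF lw lxj wx] by blast
    have xl: "x[j := True]!l" "\<not> w!l" using l c2 lw unfolding cle_iff by auto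
    show "\<not> \<phi> w ! a"
    proof (cases "l = j")
      case True
      have "cle w x" using c2 xl True lx lw unfolding cle_iff by (auto simp: nth_list_update updj split: if_splits)
      then show ?thesis using mono_nth[OF bm lw _ facts(5)] facts(7) by blast
    next
      case False
      have xl': "x!l" using xl False by simp
      have "Z!l \<longrightarrow> w!l" using c1 l lZ unfolding cle_iff by auto
      then have yl: "\<not> y!l" using xl' xl False l unfolding Z_def by simp
      define v where "v = x[l := False]"
      have lv: "length v = N" unfolding v_def using lx by simp
      have wv: "cle w (v[j := True])" using c2 xl lx lw False l(1) unfolding v_def cle_iff by (auto simp: nth_list_update updj)
      have vx: "cle v x" using lx l(1) unfolding v_def cle_iff by (auto simp: nth_list_update)
      have vj1: "cle (v[j := True]) (x[j := True])" using vx lx lv unfolding cle_iff by (auto simp: nth_list_update updj)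
      have "\<not> \<phi> (v[j := True]) ! a"
      proof (cases "v = y")
        case True
        show ?thesis
        proof
          assume n: "\<phi> (v[j := True]) ! a"
          have "\<not> \<phi> y ! a" using mono_nth[OF bm lv vx facts(5)] facts(7) True by blast
          then show False using edge[OF bm j cy ab facts(5)] n True by simp
        qed
      next
        case vy: False
        have vj: "\<not> v!j" using facts(3) False unfolding v_def by simp
        have box: "v!l' = x!l'" if "l' < N" "x!l' = y!l'" for l'
        proof -
          have "l' \<noteq> l" using that xl' yl by auto
          then show ?thesis unfolding v_def by simp
        qed
        have vx': "v \<noteq> x" using xl' l lx unfolding v_def by (metis nth_list_update_eq)
        have eq: "\<phi> (v[j := True]) = \<phi> v" by (rule intr[OF lv vj box vx' vy])
        have "\<not> \<phi> v ! a" using mono_nth[OF bm lv vx facts(5)] facts(7) by blast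
        then show ?thesis using eq by simp
      qed
      moreover have "length (v[j := True]) = N" using lv by simp
      ultimately show ?thesis using mono_nth[OF bm lw wv facts(5)] by blast
    qed
  qed
qed

end


lemma caseB:
  assumes bm: "box_morphism N p \<phi>" and j: "j < N"
    and cx: "condp N p \<phi> j x a" and cy: "condp N p \<phi> j y b" and ab: "a \<noteq> b"
    and mn: "minp N p \<phi> j x y"
    and T0: "\<exists>l<N. \<not> x!l \<and> y!l" and nT1: "\<not> (\<exists>l<N. x!l \<and> \<not> y!l)"
  shows False
proof -
  note F = facts[OF bm j cx cy ab mn]
  define W where "W = map (\<lambda>l. x!l \<or> y!l \<or> l = j) [0..<N]"
  have lW: "length W = N" unfolding W_def by simp
  have xy: "cle x y" using nT1 F(1,2) unfolding cle_iff by auto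
  have yW: "cle y W" using F(2) unfolding W_def cle_iff by auto
  have yjW: "cle (y[j := True]) W" using F(2) j unfolding W_def cle_iff by (auto simp: nth_list_update)
  have xyj: "cle x (y[j := True])" using xy cle_upd[OF F(2)] cle_trans by blast
  have yin: "y \<in> cinterval N x W" using xy yW F(2) by (simp add: cint_iff)
  have yjin: "y[j := True] \<in> cinterval N x W" using xyj yjW F(2) by (simp add: cint_iff)
  have yx: "y \<noteq> x" using T0 by auto
  have yjx: "y[j := True] \<noteq> x" using F(3) j F(2) by (metis nth_list_update_eq)
  have "\<phi> y = (\<phi> x)[a := True]" using upside[OF bm j cx cy ab mn T0] yin yx unfolding W_def by blast
  moreover have "\<phi> (y[j := True]) = (\<phi> x)[a := True]"
    using upside[OF bm j cx cy ab mn T0] yjin yjx unfolding W_def by blast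
  ultimately show False using F(9,10) by simp
qed

lemma caseD:
  assumes bm: "box_morphism N p \<phi>" and j: "j < N"
    and cx: "condp N p \<phi> j x a" and cy: "condp N p \<phi> j y b" and ab: "a \<noteq> b"
    and mn: "minp N p \<phi> j x y"
    and T0: "\<exists>l<N. \<not> x!l \<and> y!l" and T1: "\<exists>l<N. x!l \<and> \<not> y!l"
  shows False
proof -
  note F = facts[OF bm j cx cy ab mn]
  have mn': "minp N p \<phi> j y x" using minp_sym F(1,2) mn by metis
  have ba: "b \<noteq> a" using ab by simp
  define W where "W = map (\<lambda>l. x!l \<or> y!l \<or> l = j) [0..<N]"
  define Z where "Z = map (\<lambda>l. x!l \<and> y!l) [0..<N]"
  have W': "map (\<lambda>l. y!l \<or> x!l \<or> l = j) [0..<N] = W" unfolding W_def by auto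
  have Z': "map (\<lambda>l. y!l \<and> x!l) [0..<N] = Z" unfolding Z_def by auto
  have xW: "W \<in> cinterval N x W" using F(1) unfolding W_def by (auto simp: cint_iff cle_iff)
  have yW: "W \<in> cinterval N y W" using F(2) unfolding W_def by (auto simp: cint_iff cle_iff)
  have Wx: "W \<noteq> x"
  proof
    assume e: "W = x"
    obtain l where l: "l < N" "\<not> x!l" "y!l" using T0 by blast
    then have "W!l" unfolding W_def by simp
    then show False using e l by simp
  qed
  have Wy: "W \<noteq> y"
  proof
    assume e: "W = y"
    obtain l where l: "l < N" "x!l" "\<not> y!l" using T1 by blast
    then have "W!l" unfolding W_def by simp
    then show False using e l by simp
  qed
  have e1: "\<phi> W = (\<phi> x)[a := True]" using upside[OF bm j cx cy ab mn T0] xW Wx unfolding W_def by blast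
  have e2: "\<phi> W = (\<phi> y)[b := True]"
  proof -
    have T1': "\<exists>l<N. \<not> y!l \<and> x!l" using T1 by blast
    show ?thesis using upside[OF bm j cy cx ba mn' T1'] yW Wy W' by simp
  qed
  have Zx: "Z \<in> cinterval N Z (x[j := True])" using F(1) j unfolding Z_def
    by (auto simp: cint_iff cle_iff nth_list_update)
  have xx: "x \<in> cinterval N Z (x[j := True])" using F(1) j unfolding Z_def
    by (auto simp: cint_iff cle_iff nth_list_update)
  have Zy: "Z \<in> cinterval N Z (y[j := True])" using F(2) j unfolding Z_def
    by (auto simp: cint_iff cle_iff nth_list_update)
  have yy: "y \<in> cinterval N Z (y[j := True])" using F(2) j unfolding Z_def
    by (auto simp: cint_iff cle_iff nth_list_update)
  have Zxj: "Z \<noteq> x[j := True]"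
  proof
    assume e: "Z = x[j := True]"
    have "\<not> Z!j" using j F(3) unfolding Z_def by simp
    then show False using e j F(1) by simp
  qed
  have Zyj: "Z \<noteq> y[j := True]"
  proof
    assume e: "Z = y[j := True]"
    have "\<not> Z!j" using j F(4) unfolding Z_def by simp
    then show False using e j F(2) by simp
  qed
  have xxj: "x \<noteq> x[j := True]" using F(1,3) j by (metis nth_list_update_eq)
  have yyj: "y \<noteq> y[j := True]" using F(2,4) j by (metis nth_list_update_eq)
  have d1: "\<phi> Z = (\<phi> (x[j := True]))[a := False]"
    using downside[OF bm j cx cy ab mn T1] Zx Zxj unfolding Z_def by blast
  have d2: "\<phi> x = (\<phi> (x[j := True]))[a := False]"
    using downside[OF bm j cx cy ab mn T1] xx xxj unfolding Z_def by blast
  have T0': "\<exists>l<N. y!l \<and> \<not> x!l" using T0 by blast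
  have d3: "\<phi> Z = (\<phi> (y[j := True]))[b := False]"
    using downside[OF bm j cy cx ba mn' T0'] Zy Zyj Z' by simp
  have d4: "\<phi> y = (\<phi> (y[j := True]))[b := False]"
    using downside[OF bm j cy cx ba mn' T0'] yy yyj Z' by simp
  have "\<phi> x = \<phi> y" using d1 d2 d3 d4 by simp
  then have "(\<phi> x)[a := True] = (\<phi> x)[b := True]" using e1 e2 by simp
  then have "(\<phi> x)[a := True] ! a = (\<phi> x)[b := True] ! a" by simp
  moreover have "length (\<phi> x) = p" using len_phi[OF bm] F(1) by simp
  ultimately show False using F(5,7) ab by simp
qed

lemma contra_min:
  assumes bm: "box_morphism N p \<phi>" and j: "j < N"
    and cx: "condp N p \<phi> j x a" and cy: "condp N p \<phi> j y b" and ab: "a \<noteq> b"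
    and mn: "minp N p \<phi> j x y"
  shows False
proof -
  note F = facts[OF bm j cx cy ab mn]
  have mn': "minp N p \<phi> j y x" using minp_sym F(1,2) mn by metis
  consider (A) "\<exists>l<N. \<not> x!l \<and> y!l" "\<exists>l<N. x!l \<and> \<not> y!l"
    | (B) "\<exists>l<N. \<not> x!l \<and> y!l" "\<not> (\<exists>l<N. x!l \<and> \<not> y!l)"
    | (C) "\<not> (\<exists>l<N. \<not> x!l \<and> y!l)" "\<exists>l<N. x!l \<and> \<not> y!l"
    | (D) "\<not> (\<exists>l<N. \<not> x!l \<and> y!l)" "\<not> (\<exists>l<N. x!l \<and> \<not> y!l)" by blast
  then show False
  proof cases
    case A then show ?thesis using caseD[OF bm j cx cy ab mn] by blast
  next
    case B then show ?thesis using caseB[OF bm j cx cy ab mn] by blast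
  next
    case C
    have "\<exists>l<N. \<not> y!l \<and> x!l" "\<not> (\<exists>l<N. y!l \<and> \<not> x!l)" using C by blast+
    then show ?thesis using caseB[OF bm j cy cx _ mn'] ab by metis
  next
    case D
    have "x = y"
    proof (rule nth_equalityI)
      show "length x = length y" using F(1,2) by simp
      fix i assume "i < length x" then show "x!i = y!i" using D F(1) by blast
    qed
    then show ?thesis using edge[OF bm j cy ab F(5)] F(7,8) by simp
  qed
qed

lemma no_two:
  assumes bm: "box_morphism N p \<phi>" and j: "j < N"
    and cx: "condp N p \<phi> j x a" and cy: "condp N p \<phi> j y b" and ab: "a \<noteq> b"
  shows False
proof -
  define P where "P = (\<lambda>(x', y', a', b'). condp N p \<phi> j x' a' \<and> condp N p \<phi> j y' b' \<and> (a'::nat) \<noteq> b')"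
  define m where "m = (\<lambda>(x' :: bool list, y' :: bool list, a' :: nat, b' :: nat). hd_dist x' y')"
  have "P (x, y, a, b)" unfolding P_def using cx cy ab by simp
  then obtain t where t: "P t" "\<And>s. P s \<Longrightarrow> m t \<le> m s" using ex_has_least_nat[of P "(x, y, a, b)" m] by blast
  obtain x1 y1 a1 b1 where t1: "t = (x1, y1, a1, b1)" by (cases t) auto
  have c: "condp N p \<phi> j x1 a1" "condp N p \<phi> j y1 b1" "a1 \<noteq> b1" using t(1) t1 unfolding P_def by auto
  have "minp N p \<phi> j x1 y1" unfolding minp_def
  proof (intro allI impI)
    fix x' y' a' b' assume "condp N p \<phi> j x' a' \<and> condp N p \<phi> j y' b' \<and> a' \<noteq> b'"
    then have "P (x', y', a', b')" unfolding P_def by simp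
    then show "hd_dist x1 y1 \<le> hd_dist x' y'" using t(2) t1 unfolding m_def by fastforce
  qed
  then show False using contra_min[OF bm j c] by blast
qed


lemma block:
  "i < length Ls \<Longrightarrow> take (length (Ls!i)) (drop (\<Sum>j<i. length (Ls!j)) (concat Ls)) = Ls!i"
proof (induction Ls arbitrary: i)
  case Nil then show ?case by simp
next
  case (Cons l Ls)
  show ?case
  proof (cases i)
    case 0 then show ?thesis by simp
  next
    case (Suc i')
    then have "i' < length Ls" using Cons.prems by simp
    have s: "(\<Sum>j<Suc i'. length ((l#Ls)!j)) = length l + (\<Sum>j<i'. length (Ls!j))"
      by (simp only: sum.lessThan_Suc_shift) simp
    show ?thesis using Cons.IH[OF \<open>i' < length Ls\<close>] Suc by (simp only: s) simp
  qed
qed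

lemma exists_pre:
  "distinct F \<Longrightarrow> \<forall>l\<in>set F. l < N \<Longrightarrow> length (ys :: bool list) = length F \<Longrightarrow>
     \<exists>x'. length x' = N \<and> map (nth x') F = ys"
proof (induction F arbitrary: ys)
  case Nil
  then have "ys = []" by simp
  then have "map (nth (replicate N False)) [] = ys" by simp
  moreover have "length (replicate N False) = N" by simp
  ultimately show ?case by blast
next
  case (Cons f F)
  obtain y ys' where ys: "ys = y # ys'" using Cons.prems(3) by (cases ys) auto
  have "distinct F" "\<forall>l\<in>set F. l < N" "length ys' = length F" using Cons.prems ys by auto
  then obtain x0 where x0: "length x0 = N" "map (nth x0) F = ys'" using Cons.IH by blast
  have fF: "f \<notin> set F" using Cons.prems(1) by simp
  have "map (nth (x0[f := y])) F = map (nth x0) F"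
  proof (rule map_cong)
    fix l assume "l \<in> set F"
    then have "l \<noteq> f" using fF by auto
    then show "x0[f := y] ! l = x0 ! l" by simp
  qed simp
  then have "map (nth (x0[f := y])) F = ys'" using x0 by simp
  moreover have "x0[f := y] ! f = y" using x0 Cons.prems(2) by simp
  ultimately have "map (nth (x0[f := y])) (f # F) = ys" using ys by simp
  moreover have "length (x0[f := y]) = N" using x0 by simp
  ultimately show ?case by blast
qed

definition dep :: "nat \<Rightarrow> nat \<Rightarrow> (bool list \<Rightarrow> bool list) \<Rightarrow> nat \<Rightarrow> nat \<Rightarrow> bool" where
  "dep N p \<phi> i j \<longleftrightarrow> (\<exists>x. condp N p \<phi> j x i)"

definition col :: "nat \<Rightarrow> nat \<Rightarrow> (bool list \<Rightarrow> bool list) \<Rightarrow> nat \<Rightarrow> nat" where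
  "col N p \<phi> j = (if \<exists>i. dep N p \<phi> i j then (SOME i. dep N p \<phi> i j) else 0)"

context
  fixes N p :: nat and \<phi> :: "bool list \<Rightarrow> bool list"
  assumes bm: "box_morphism N p \<phi>" and pp: "0 < p"
begin

lemma col_eq: "j < N \<Longrightarrow> dep N p \<phi> i j \<Longrightarrow> col N p \<phi> j = i"
proof -
  assume j: "j < N" and d: "dep N p \<phi> i j"
  have "dep N p \<phi> (SOME i. dep N p \<phi> i j) j" using d by (rule someI)
  then have "(SOME i. dep N p \<phi> i j) = i" using d no_two[OF bm j] unfolding dep_def by metis
  then show ?thesis using d unfolding col_def by auto
qed

lemma col_lt: "col N p \<phi> j < p"
proof (cases "\<exists>i. dep N p \<phi> i j")
  case True
  then have "dep N p \<phi> (SOME i. dep N p \<phi> i j) j" by (rule someI_ex)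
  then show ?thesis using True unfolding col_def dep_def condp_def by auto
next
  case False then show ?thesis using pp unfolding col_def by simp
qed

lemma flip:
  assumes lx: "length x = N" and j: "j < N" and i: "i < p" and nd: "\<not> dep N p \<phi> i j"
  shows "\<phi> (x[j := True]) ! i = \<phi> (x[j := False]) ! i"
proof -
  define x0 where "x0 = x[j := False]"
  have l0: "length x0 = N" unfolding x0_def using lx by simp
  have e: "x0[j := True] = x[j := True]" unfolding x0_def by simp
  have "\<phi> x0 ! i \<longrightarrow> \<phi> (x0[j := True]) ! i" using mono_nth[OF bm l0 cle_upd[OF l0] i] by blast
  moreover have "\<not> (\<not> \<phi> x0 ! i \<and> \<phi> (x0[j := True]) ! i)"
  proof
    assume "\<not> \<phi> x0 ! i \<and> \<phi> (x0[j := True]) ! i"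
    then have "condp N p \<phi> j x0 i" using i l0 j unfolding condp_def x0_def by simp
    then show False using nd unfolding dep_def by blast
  qed
  ultimately show ?thesis using e unfolding x0_def by (metis (full_types))
qed

lemma agree_gen:
  assumes fin: "finite J" and i: "i < p"
  shows "\<forall>x x'. length x = N \<longrightarrow> length x' = N \<longrightarrow> (\<forall>l<N. l \<notin> J \<longrightarrow> x!l = x'!l)
      \<longrightarrow> (\<forall>l\<in>J. l < N \<longrightarrow> \<not> dep N p \<phi> i l) \<longrightarrow> \<phi> x ! i = \<phi> x' ! i"
  using fin
proof (induction J)
  case empty
  show ?case
  proof (intro allI impI)
    fix x x' :: "bool list" assume "length x = N" "length x' = N" "\<forall>l<N. l \<notin> {} \<longrightarrow> x!l = x'!l"
    then have "x = x'" by (intro nth_equalityI) auto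
    then show "\<phi> x ! i = \<phi> x' ! i" by simp
  qed
next
  case (insert l J)
  show ?case
  proof (intro allI impI)
    fix x x' :: "bool list"
    assume lx: "length x = N" and lx': "length x' = N" and ag: "\<forall>l'<N. l' \<notin> insert l J \<longrightarrow> x!l' = x'!l'"
      and nd: "\<forall>l'\<in>insert l J. l' < N \<longrightarrow> \<not> dep N p \<phi> i l'"
    show "\<phi> x ! i = \<phi> x' ! i"
    proof (cases "l < N")
      case False
      then have ag2: "\<forall>l'<N. l' \<notin> J \<longrightarrow> x!l' = x'!l'" using ag by auto
      have nd2: "\<forall>l'\<in>J. l' < N \<longrightarrow> \<not> dep N p \<phi> i l'" using nd by blast
      show ?thesis using insert.IH[rule_format, OF lx lx'] ag2 nd2 by blast
    next
      case True
      define x2 where "x2 = x'[l := x!l]"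
      have l2: "length x2 = N" unfolding x2_def using lx' by simp
      have ag2: "\<forall>l'<N. l' \<notin> J \<longrightarrow> x!l' = x2!l'"
      proof (intro allI impI)
        fix l' assume l': "l' < N" "l' \<notin> J"
        show "x!l' = x2!l'"
        proof (cases "l' = l")
          case True then show ?thesis unfolding x2_def using l' lx' by simp
        next
          case False
          then have "x2!l' = x'!l'" unfolding x2_def by simp
          then show ?thesis using ag l' False by simp
        qed
      qed
      have nd2: "\<forall>l'\<in>J. l' < N \<longrightarrow> \<not> dep N p \<phi> i l'" using nd by blast
      have e1: "\<phi> x ! i = \<phi> x2 ! i" using insert.IH[rule_format, OF lx l2] ag2 nd2 by blast
      have ndl: "\<not> dep N p \<phi> i l" using nd True by blast
      have ft: "\<phi> (x'[l := True]) ! i = \<phi> (x'[l := False]) ! i" using flip[OF lx' True i ndl] .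
      have "\<phi> x2 ! i = \<phi> x' ! i"
      proof -
        have idT: "x'[l := True] = x'" if "x'!l" using that by (metis list_update_id)
        have idF: "x'[l := False] = x'" if "\<not> x'!l" using that by (metis list_update_id)
        show ?thesis unfolding x2_def using ft idT idF by (cases "x!l"; cases "x'!l") simp_all
      qed
      then show ?thesis using e1 by simp
    qed
  qed
qed

lemma agree:
  assumes lx: "length x = N" and lx': "length x' = N" and i: "i < p"
    and ag: "\<And>l. l < N \<Longrightarrow> col N p \<phi> l = i \<Longrightarrow> x!l = x'!l"
  shows "\<phi> x ! i = \<phi> x' ! i"
proof -
  let ?J = "{l. l < N \<and> col N p \<phi> l \<noteq> i}"
  have "\<forall>l\<in>?J. l < N \<longrightarrow> \<not> dep N p \<phi> i l" using col_eq by blast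
  moreover have "\<forall>l<N. l \<notin> ?J \<longrightarrow> x!l = x'!l" using ag by auto
  moreover have "finite ?J" by simp
  ultimately show ?thesis using agree_gen[OF _ i, rule_format, OF _ lx lx'] by blast
qed

end


lemma decomp:
  assumes bm: "box_morphism N p \<phi>" and pp: "0 < p"
  shows "\<exists>(k :: nat \<Rightarrow> nat) (\<phi>s :: nat \<Rightarrow> bool list \<Rightarrow> bool) (\<sigma> :: nat \<Rightarrow> nat).
           (\<Sum>i<p. k i) = N \<and>
           (\<forall>i<p. cmono (k i) (\<phi>s i) (\<le>)) \<and>
           \<sigma> permutes {0..<N} \<and>
           (\<forall>x\<in>cube N. \<phi> x = prod_map p k \<phi>s (coord_perm N \<sigma> x))"
proof -
  define c where "c = col N p \<phi>"
  define F where "F i = filter (\<lambda>l. c l = i) [0..<N]" for i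
  define L where "L = concat (map F [0..<p])"
  define k where "k i = length (F i)" for i
  define \<sigma> where "\<sigma> t = (if t < N then L!t else t)" for t
  define \<phi>s where "\<phi>s i ys = \<phi> (SOME x'. length x' = N \<and> map (nth x') (F i) = ys) ! i" for i ys
  have clt: "c l < p" for l unfolding c_def using col_lt[OF bm pp] .
  have setF: "set (F i) = {l. l < N \<and> c l = i}" for i unfolding F_def by auto
  have distF: "distinct (F i)" for i unfolding F_def by simp
  have gen: "distinct (concat (map F [0..<q])) \<and> set (concat (map F [0..<q])) = {l. l < N \<and> c l < q}" for q
  proof (induction q)
    case 0 then show ?case by simp
  next
    case (Suc q)
    have "concat (map F [0..<Suc q]) = concat (map F [0..<q]) @ F q" by simp
    moreover have "set (concat (map F [0..<q])) \<inter> set (F q) = {}" using Suc setF by auto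
    ultimately show ?case using Suc distF[of q] setF[of q] by auto
  qed
  have distL: "distinct L" and setL: "set L = {0..<N}" using gen[of p] clt unfolding L_def by auto
  have lenL: "length L = N" using distinct_card[OF distL] setL by simp
  have sumk: "(\<Sum>i<p. k i) = N"
  proof -
    have "length L = sum_list (map (\<lambda>i. length (F i)) [0..<p])" unfolding L_def
      by (simp add: length_concat comp_def)
    also have "\<dots> = (\<Sum>i\<in>{0..<p}. length (F i))" by (simp add: sum_set_upt_conv_sum_list_nat[symmetric])
    finally show ?thesis using lenL unfolding k_def by (simp add: atLeast0LessThan)
  qed
  have perm: "\<sigma> permutes {0..<N}"
  proof (rule bij_imp_permutes)
    have "bij_betw (nth L) {..<length L} (set L)" by (rule bij_betw_nth[OF distL]) auto
    then have "bij_betw (nth L) {0..<N} {0..<N}" using setL lenL by (simp add: atLeast0LessThan)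
    then show "bij_betw \<sigma> {0..<N} {0..<N}" by (rule bij_betw_cong[THEN iffD1, rotated]) (simp add: \<sigma>_def)
  next
    fix t assume "t \<notin> {0..<N}" then show "\<sigma> t = t" unfolding \<sigma>_def by simp
  qed
  have cp: "coord_perm N \<sigma> x = map (nth x) L" for x
  proof -
    have "coord_perm N \<sigma> x = map (\<lambda>t. x ! (L ! t)) [0..<length L]" unfolding coord_perm_def \<sigma>_def lenL
      by simp
    also have "\<dots> = map (nth x) (map (nth L) [0..<length L])" by simp
    also have "\<dots> = map (nth x) L" by (simp only: map_nth)
    finally show ?thesis .
  qed
  have blk: "take (k i) (drop (\<Sum>j<i. k j) (map (nth x) L)) = map (nth x) (F i)" if i: "i < p" for x i
  proof -
    define Ls where "Ls = map (\<lambda>i. map (nth x) (F i)) [0..<p]"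
    have e1: "map (nth x) L = concat Ls" unfolding L_def Ls_def by (simp add: map_concat comp_def)
    have e2: "length (Ls!j) = k j" if "j < p" for j using that unfolding Ls_def k_def by simp
    have e3: "(\<Sum>j<i. k j) = (\<Sum>j<i. length (Ls!j))" using e2 i by (intro sum.cong) auto
    have "take (length (Ls!i)) (drop (\<Sum>j<i. length (Ls!j)) (concat Ls)) = Ls!i"
      by (rule block) (simp add: Ls_def i)
    then show ?thesis using e1 e2[OF i] e3 i unfolding Ls_def by simp
  qed
  have sel: "length (SOME x'. length x' = N \<and> map (nth x') (F i) = ys) = N \<and>
      map (nth (SOME x'. length x' = N \<and> map (nth x') (F i) = ys)) (F i) = ys"
    if "length (ys :: bool list) = k i" for i ys
  proof (rule someI_ex)
    show "\<exists>x'. length x' = N \<and> map (nth x') (F i) = ys"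
      by (rule exists_pre[OF distF]) (use that setF k_def in auto)
  qed
  have agF: "\<phi> x1 ! i = \<phi> x2 ! i" if "length x1 = N" "length x2 = N" "map (nth x1) (F i) = map (nth x2) (F i)" "i < p"
    for x1 x2 i
  proof (rule agree[OF bm pp that(1,2,4)])
    fix l assume "l < N" "col N p \<phi> l = i"
    then have "l \<in> set (F i)" using setF c_def by auto
    then show "x1!l = x2!l" using that(3) by (simp add: map_eq_conv)
  qed
  have eqn: "\<phi> x = prod_map p k \<phi>s (coord_perm N \<sigma> x)" if lx: "length x = N" for x
  proof -
    have "prod_map p k \<phi>s (coord_perm N \<sigma> x) = map (\<lambda>i. \<phi>s i (map (nth x) (F i))) [0..<p]"
      unfolding prod_map_def cp by (rule map_cong) (simp_all add: blk)
    also have "\<dots> = map (\<lambda>i. \<phi> x ! i) [0..<p]"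
    proof (rule map_cong)
      fix i assume "i \<in> set [0..<p]"
      then have i: "i < p" by simp
      have "length (map (nth x) (F i)) = k i" unfolding k_def by simp
      note s = sel[OF this]
      show "\<phi>s i (map (nth x) (F i)) = \<phi> x ! i" unfolding \<phi>s_def
        by (rule agF) (use s lx i in auto)
    qed simp
    also have "\<dots> = \<phi> x" using len_phi[OF bm lx] by (intro nth_equalityI) auto
    finally show ?thesis by simp
  qed
  have mono: "cmono (k i) (\<phi>s i) (\<le>)" if i: "i < p" for i
    unfolding cmono_def
  proof (intro ballI impI)
    fix ys ys' assume ys: "ys \<in> cube (k i)" and ys': "ys' \<in> cube (k i)" and le: "cle ys ys'"
    define x1 where "x1 = (SOME x'. length x' = N \<and> map (nth x') (F i) = ys)"
    define x2 where "x2 = (SOME x'. length x' = N \<and> map (nth x') (F i) = ys')"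
    have s1: "length x1 = N" "map (nth x1) (F i) = ys" using sel[of ys i] ys unfolding x1_def by auto
    have s2: "length x2 = N" "map (nth x2) (F i) = ys'" using sel[of ys' i] ys' unfolding x2_def by auto
    define u1 where "u1 = map (\<lambda>l. c l = i \<and> x1!l) [0..<N]"
    define u2 where "u2 = map (\<lambda>l. c l = i \<and> x2!l) [0..<N]"
    have lu: "length u1 = N" "length u2 = N" unfolding u1_def u2_def by auto
    have a1: "\<phi> x1 ! i = \<phi> u1 ! i"
      by (rule agree[OF bm pp s1(1) lu(1) i]) (simp add: u1_def c_def)
    have a2: "\<phi> x2 ! i = \<phi> u2 ! i"
      by (rule agree[OF bm pp s2(1) lu(2) i]) (simp add: u2_def c_def)
    have "cle u1 u2" unfolding cle_iff
    proof (intro conjI allI impI)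
      show "length u1 = length u2" using lu by simp
      fix l assume l: "l < length u1" and u: "u1 ! l"
      then have lN: "l < N" and cl: "c l = i" and x1l: "x1!l" using lu unfolding u1_def by auto
      then have "l \<in> set (F i)" using setF by auto
      then obtain t where t: "t < length (F i)" "F i ! t = l" by (auto simp: in_set_conv_nth)
      have "ys ! t = x1 ! l" using s1(2) t by (metis nth_map)
      moreover have "ys' ! t = x2 ! l" using s2(2) t by (metis nth_map)
      moreover have "ys ! t \<longrightarrow> ys' ! t" using le t ys unfolding cle_iff k_def by simp
      ultimately have "x2!l" using x1l by simp
      then show "u2 ! l" using lN cl unfolding u2_def by simp
    qed
    then have "\<phi> u1 ! i \<longrightarrow> \<phi> u2 ! i" using mono_nth[OF bm lu(1) _ i] by blast
    then show "\<phi>s i ys \<le> \<phi>s i ys'" unfolding \<phi>s_def using a1 a2 x1_def x2_def by simp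
  qed
  show ?thesis using sumk mono perm eqn by (intro exI[of _ k] exI[of _ \<phi>s] exI[of _ \<sigma>]) auto
qed


theorem mainTheorem9:
  fixes m n :: nat and \<phi> :: "bool list \<Rightarrow> bool list"
  assumes "box_morphism (m + n + 1) (n + 1) \<phi>"
    and "\<phi> ` cube (m + n + 1) = cube (n + 1)"
  shows "\<exists>(k :: nat \<Rightarrow> nat) (\<phi>s :: nat \<Rightarrow> bool list \<Rightarrow> bool) (\<sigma> :: nat \<Rightarrow> nat).
           (\<Sum>i<n + 1. k i) = m + n + 1 \<and>
           (\<forall>i<n + 1. cmono (k i) (\<phi>s i) (\<le>)) \<and>
           \<sigma> permutes {0..<m + n + 1} \<and>
           (\<forall>x\<in>cube (m + n + 1).
              \<phi> x = prod_map (n + 1) k \<phi>s (coord_perm (m + n + 1) \<sigma> x))"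
    by (rule decomp[OF assms(1)]) simp

end
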